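(* Let $f$ be a uniform continuation of $F$, and let $K$ be a sequence of positive real numbers approaching $\infty$. Then $\{f^{-1}(\lfloor K_n\rfloor)\}=\{f^{-1}(K_n)\}+o(1)$ as $n\to\infty$.
   Context: $F$: $F_1=1,F_2=2,F_{n+2}=F_{n+1}+F_n$. A uniform continuation of $F$ is an increasing continuous function $f:[1,\infty)\to\mathbb{R}$ with $f(n)=F_n$ for all $n\in\mathbb{N}$ such that $f_n(p)=\frac{f(n+p)-f(n)}{f(n+1)-f(n)}$ ($p\in[0,1]$) converges uniformly on $[0,1]$ to an increasing continuous function $f_\infty$; $f^{-1}$ denotes the inverse of $f$, and $\{y\}$ denotes the fractional part. *)

theory Defs
  imports "HOL-Analysis.Analysis"
begin

text \<open>The sequence F with F 1 = 1, F 2 = 2, F (n+2) = F (n+1) + F n (index 0 unused).\<close>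
fun FF :: "nat \<Rightarrow> real" where
  "FF 0 = 0"
| "FF (Suc 0) = 1"
| "FF (Suc (Suc 0)) = 2"
| "FF (Suc (Suc (Suc n))) = FF (Suc (Suc n)) + FF (Suc n)"

definition incr_fn :: "(real \<Rightarrow> real) \<Rightarrow> nat \<Rightarrow> real \<Rightarrow> real" where
  "incr_fn f n p = (f (real n + p) - f (real n)) / (f (real n + 1) - f (real n))"

definition uniform_continuation :: "(real \<Rightarrow> real) \<Rightarrow> bool" where
  "uniform_continuation f \<longleftrightarrow>
     strict_mono_on {1..} f \<and> continuous_on {1..} f \<and>
     (\<forall>n::nat. n \<ge> 1 \<longrightarrow> f (real n) = FF n) \<and>
     (\<exists>finf. strict_mono_on {0..1} finf \<and> continuous_on {0..1} finf \<and>
        uniform_limit {0..1} (incr_fn f) finf sequentially)"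

definition finv :: "(real \<Rightarrow> real) \<Rightarrow> real \<Rightarrow> real" where
  "finv f y = the_inv_into {1..} f y"

end

theory Submission
  imports Defs
begin

lemma FF_int: "FF n \<in> \<int>"
  by (induction n rule: FF.induct) auto

lemma FF_ge: "FF n \<ge> real n"
  by (induction n rule: FF.induct) auto

lemma FF_Suc_gt: "FF n < FF (Suc n)"
proof (induction n rule: FF.induct)
  case (4 n)
  have "0 \<le> FF (Suc n)" using FF_ge[of "Suc n"] by simp
  moreover have "0 < FF (Suc (Suc n))" using FF_ge[of "Suc (Suc n)"] by simp
  ultimately show ?case by simp
qed auto

lemma FF_strict: "strict_mono FF"
  by (rule strict_monoI_Suc) (rule FF_Suc_gt)

lemma FF_gap: "FF (Suc (Suc (Suc n))) - FF (Suc (Suc n)) \<ge> real n + 1"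
  using FF_ge[of "Suc n"] by simp

lemma FF_bracket_aux: "1 \<le> y \<Longrightarrow> y < FF N \<Longrightarrow> \<exists>m\<ge>1. FF m \<le> y \<and> y < FF (Suc m)"
proof (induction N)
  case 0 then show ?case by simp
next
  case (Suc N)
  show ?case
  proof (cases "y < FF N")
    case True then show ?thesis using Suc by blast
  next
    case False
    have "N \<ge> 1"
    proof (rule ccontr)
      assume "\<not> N \<ge> 1" then have "N = 0" by simp
      then show False using Suc.prems by simp
    qed
    then show ?thesis using False Suc.prems by auto
  qed
qed

lemma FF_bracket: "1 \<le> y \<Longrightarrow> \<exists>m\<ge>1. FF m \<le> y \<and> y < FF (Suc m)"
proof -
  assume y: "1 \<le> y"
  obtain N :: nat where "y < real N" using reals_Archimedean2 by blast
  then have "y < FF N" using FF_ge[of N] by linarith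
  then show ?thesis using FF_bracket_aux y by blast
qed

lemma finv_bracket:
  assumes uc: "uniform_continuation f" and m: "m \<ge> 1"
    and y: "FF m \<le> y" "y < FF (Suc m)"
  shows "real m \<le> finv f y \<and> finv f y < real m + 1 \<and> f (finv f y) = y"
proof -
  have sm: "strict_mono_on {1..} f" and ct: "continuous_on {1..} f"
    and ff: "\<And>n::nat. n \<ge> 1 \<Longrightarrow> f (real n) = FF n"
    using uc unfolding uniform_continuation_def by auto
  have ct2: "continuous_on {real m..real m + 1} f"
    using ct by (rule continuous_on_subset) (use m in auto)
  have fm: "f (real m) = FF m" using ff m by simp
  have fm1: "f (real m + 1) = FF (Suc m)" using ff[of "Suc m"] by (simp add: add.commute)
  obtain x where x: "x \<ge> real m" "x \<le> real m + 1" "f x = y"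
    using IVT'[of f "real m" y "real m + 1", OF _ _ _ ct2] fm fm1 y by auto
  have "x \<noteq> real m + 1" using x(3) fm1 y(2) by auto
  with x have xl: "x < real m + 1" by simp
  have "finv f y = x" unfolding finv_def
    by (rule the_inv_into_f_eq[OF strict_mono_on_imp_inj_on[OF sm] x(3)]) (use x m in auto)
  then show ?thesis using x xl by simp
qed

lemma sep:
  fixes g :: "real \<Rightarrow> real"
  assumes sm: "strict_mono_on {0..1} g" and ct: "continuous_on {0..1} g" and e: "e > 0"
  shows "\<exists>d>0. \<forall>p\<in>{0..1}. \<forall>q\<in>{0..1}. \<bar>g p - g q\<bar> < d \<longrightarrow> \<bar>p - q\<bar> < e"
proof (cases "e \<le> 1")
  case False
  then show ?thesis by (intro exI[of _ 1]) auto
next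
  case True
  let ?h = "\<lambda>x. g (x + e) - g x"
  have "continuous_on {0..1-e} (\<lambda>x. g (x + e))"
    by (rule continuous_on_compose2[OF ct]) (use e in \<open>auto intro!: continuous_intros\<close>)
  moreover have "continuous_on {0..1-e} g"
    by (rule continuous_on_subset[OF ct]) (use e in auto)
  ultimately have "continuous_on {0..1-e} ?h" by (intro continuous_intros)
  then obtain x0 where x0: "x0 \<in> {0..1-e}" "\<forall>y\<in>{0..1-e}. ?h x0 \<le> ?h y"
    using continuous_attains_inf[of "{0..1-e}" ?h] True e by auto
  have pos: "?h x0 > 0" using x0(1) e sm unfolding strict_mono_on_def by auto
  show ?thesis
  proof (intro exI[of _ "?h x0"] conjI pos ballI impI)
    fix p q :: real assume p: "p \<in> {0..1}" and q: "q \<in> {0..1}" and lt: "\<bar>g p - g q\<bar> < ?h x0"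
    show "\<bar>p - q\<bar> < e"
    proof (rule ccontr)
      assume "\<not> \<bar>p - q\<bar> < e"
      then consider "p + e \<le> q" | "q + e \<le> p" by linarith
      then show False
      proof cases
        case 1
        have "?h x0 \<le> ?h p" using x0(2) p q 1 e by auto
        moreover have "g (p + e) \<le> g q" using sm[unfolded strict_mono_on_def, rule_format, of "p+e" q] p q 1 e
          by (cases "p + e = q") auto
        ultimately show False using lt by auto
      next
        case 2
        have "?h x0 \<le> ?h q" using x0(2) p q 2 e by auto
        moreover have "g (q + e) \<le> g p" using sm[unfolded strict_mono_on_def, rule_format, of "q+e" p] p q 2 e
          by (cases "q + e = p") auto
        ultimately show False using lt by auto
      qed
    qed
  qed
qed

theorem lemma5p5:
  fixes f :: "real \<Rightarrow> real" and K :: "nat \<Rightarrow> real"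
  assumes "uniform_continuation f"
    and "\<And>n. K n > 0"
    and "filterlim K at_top sequentially"
  shows "(\<lambda>n. frac (finv f (of_int \<lfloor>K n\<rfloor>)) - frac (finv f (K n))) \<longlonglongrightarrow> 0"
proof -
  note uc = assms(1)
  have ff: "\<And>n::nat. n \<ge> 1 \<Longrightarrow> f (real n) = FF n"
    using uc unfolding uniform_continuation_def by auto
  obtain finf where fsm: "strict_mono_on {0..1} finf" and fct: "continuous_on {0..1} finf"
    and ul: "uniform_limit {0..1} (incr_fn f) finf sequentially"
    using uc unfolding uniform_continuation_def by auto
  show ?thesis unfolding tendsto_iff
  proof (intro allI impI)
    fix e :: real assume e: "e > 0"
    obtain d where d: "d > 0" and dsep: "\<forall>p\<in>{0..1}. \<forall>q\<in>{0..1}. \<bar>finf p - finf q\<bar> < d \<longrightarrow> \<bar>p - q\<bar> < e"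
      using sep[OF fsm fct e] by auto
    have "\<forall>\<^sub>F m in sequentially. \<forall>x\<in>{0..1}. dist (incr_fn f m x) (finf x) < d/3"
      using uniform_limitD[OF ul, of "d/3"] d by simp
    then obtain N1 where N1: "\<And>m x. m \<ge> N1 \<Longrightarrow> x \<in> {0..1} \<Longrightarrow> \<bar>incr_fn f m x - finf x\<bar> < d/3"
      unfolding eventually_sequentially dist_real_def by blast
    obtain N2 :: nat where N2: "3 / d < real N2" using reals_Archimedean2 by blast
    define M where "M = N1 + N2 + 3"
    have "\<forall>\<^sub>F n in sequentially. K n \<ge> FF M"
      using assms(3) by (simp add: filterlim_at_top)
    then show "\<forall>\<^sub>F n in sequentially. dist (frac (finv f (of_int \<lfloor>K n\<rfloor>)) - frac (finv f (K n))) 0 < e"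
    proof (rule eventually_mono)
      fix n assume Kn: "K n \<ge> FF M"
      have "FF M \<ge> 1" using FF_ge[of M] unfolding M_def by simp
      then obtain m where m: "m \<ge> 1" "FF m \<le> K n" "K n < FF (Suc m)"
        using FF_bracket[of "K n"] Kn by auto
      have "M < Suc m" using Kn m(3) strict_mono_less[OF FF_strict, of M "Suc m"] by linarith
      then have mM: "m \<ge> M" by simp
      define fl where "fl = (of_int \<lfloor>K n\<rfloor> :: real)"
      obtain k where k: "FF m = of_int k" using FF_int[of m] by (auto elim: Ints_cases)
      have "k \<le> \<lfloor>K n\<rfloor>" using m(2) k by (simp add: le_floor_iff)
      then have fl1: "FF m \<le> fl" unfolding fl_def using k by simp
      have fl2: "fl < FF (Suc m)" unfolding fl_def using m(3) by linarith
      have flK: "fl \<le> K n" "K n < fl + 1" unfolding fl_def by linarith+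
      define x where "x = finv f (K n)"
      define y where "y = finv f fl"
      have x: "real m \<le> x" "x < real m + 1" "f x = K n"
        using finv_bracket[OF uc m] unfolding x_def by auto
      have y: "real m \<le> y" "y < real m + 1" "f y = fl"
        using finv_bracket[OF uc m(1) fl1 fl2] unfolding y_def by auto
      have "\<lfloor>x\<rfloor> = int m" using x by (simp add: floor_eq_iff)
      then have fx: "frac x = x - real m" by (simp add: frac_def)
      have "\<lfloor>y\<rfloor> = int m" using y by (simp add: floor_eq_iff)
      then have fy: "frac y = y - real m" by (simp add: frac_def)
      define G where "G = FF (Suc m) - FF m"
      obtain j where j: "m = Suc (Suc (Suc j))" using mM unfolding M_def
      proof -
        have "m \<ge> 3" using mM unfolding M_def by simp
        then show ?thesis using that[of "m - 3"] by simp
      qed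
      have "j \<ge> N2" using mM j unfolding M_def by simp
      then have G: "G \<ge> real N2 + 1" using FF_ge[of "Suc (Suc j)"] unfolding G_def j by simp
      have Gpos: "G > 0" using G by simp
      have fm: "f (real m) = FF m" using ff m(1) by simp
      have fm1: "f (real m + 1) = FF (Suc m)" using ff[of "Suc m"] by (simp add: add.commute)
      have ix: "incr_fn f m (x - real m) = (K n - FF m) / G"
        unfolding incr_fn_def G_def using x fm fm1 by simp
      have iy: "incr_fn f m (y - real m) = (fl - FF m) / G"
        unfolding incr_fn_def G_def using y fm fm1 by simp
      have "\<bar>incr_fn f m (x - real m) - incr_fn f m (y - real m)\<bar> = (K n - fl) / G"
        using ix iy flK Gpos by (simp add: diff_divide_distrib[symmetric])
      also have "\<dots> \<le> 1 / G" using flK Gpos by (simp add: divide_right_mono)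
      also have "\<dots> < d / 3"
      proof -
        have "3 / d < G" using N2 G by linarith
        then show ?thesis using d Gpos by (simp add: field_simps)
      qed
      finally have c1: "\<bar>incr_fn f m (x - real m) - incr_fn f m (y - real m)\<bar> < d / 3" .
      have xin: "x - real m \<in> {0..1}" and yin: "y - real m \<in> {0..1}" using x y by auto
      have "m \<ge> N1" using mM unfolding M_def by simp
      then have "\<bar>incr_fn f m (x - real m) - finf (x - real m)\<bar> < d/3"
        "\<bar>incr_fn f m (y - real m) - finf (y - real m)\<bar> < d/3"
        using N1 xin yin by auto
      then have "\<bar>finf (x - real m) - finf (y - real m)\<bar> < d" using c1 by linarith
      then have "\<bar>(x - real m) - (y - real m)\<bar> < e" using dsep xin yin by blast
      then show "dist (frac (finv f (of_int \<lfloor>K n\<rfloor>)) - frac (finv f (K n))) 0 < e"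
        using fx fy unfolding x_def y_def fl_def dist_real_def by simp
    qed
  qed
qed

end
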